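(* For each integer $d \ge 2$ and each prime number $p$, there exists $c\in\mathbb{C}$ such that every critical point of the rational map $f(z) = z^{-d} + c$ on $\mathbb{P}^1_{\mathbb{C}}$ has exact period $p$.
   Context: The critical points of $f(z)=z^{-d}+c$ are $0$ and $\infty$. A point $P$ has exact period $p$ if $f^p(P)=P$ and $f^j(P)\neq P$ for $0<j<p$. *)

theory Defs
  imports "HOL-Analysis.Analysis"
begin

datatype csphere = Fin complex | Infty

fun chart :: "csphere \<Rightarrow> csphere \<Rightarrow> complex" where
  "chart (Fin q) (Fin z) = z - q"
| "chart (Fin q) Infty = 0"
| "chart Infty (Fin z) = inverse z"
| "chart Infty Infty = 0"

fun chart_inv :: "csphere \<Rightarrow> complex \<Rightarrow> csphere" where
  "chart_inv (Fin q) w = Fin (w + q)"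
| "chart_inv Infty w = (if w = 0 then Infty else Fin (inverse w))"

definition critical_point :: "(csphere \<Rightarrow> csphere) \<Rightarrow> csphere \<Rightarrow> bool" where
  "critical_point F P \<longleftrightarrow> deriv (\<lambda>w. chart (F P) (F (chart_inv P w))) 0 = 0"

fun fdc :: "nat \<Rightarrow> complex \<Rightarrow> csphere \<Rightarrow> csphere" where
  "fdc d c Infty = Fin c"
| "fdc d c (Fin z) = (if z = 0 then Infty else Fin (inverse (z ^ d) + c))"

definition exact_period :: "('a \<Rightarrow> 'a) \<Rightarrow> 'a \<Rightarrow> nat \<Rightarrow> bool" where
  "exact_period F P p \<longleftrightarrow> (F ^^ p) P = P \<and> (\<forall>j. 0 < j \<and> j < p \<longrightarrow> (F ^^ j) P \<noteq> P)"

end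

theory Submission
  imports Defs "HOL-Computational_Algebra.Fundamental_Theorem_Algebra"
begin

fun XY :: "nat \<Rightarrow> nat \<Rightarrow> complex poly \<times> complex poly" where
  "XY d 0 = (0, 1)"
| "XY d (Suc n) = ((snd (XY d n))^d + [:0,1:] * (fst (XY d n))^d, (fst (XY d n))^d)"

definition proj :: "complex \<times> complex \<Rightarrow> csphere" where
  "proj v = (if snd v = 0 then Infty else Fin (fst v / snd v))"

lemma proj_step:
  assumes "v \<noteq> (0,0)" "d \<ge> 1"
  shows "fdc d c (proj v) = proj ((snd v)^d + c * (fst v)^d, (fst v)^d)"
  using assms by (cases v) (auto simp: proj_def field_simps power_divide)

lemma XY_nz: assumes "d \<ge> 1" shows "(poly (fst (XY d n)) c, poly (snd (XY d n)) c) \<noteq> (0,0)"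
proof (induction n)
  case 0 then show ?case by simp
next
  case (Suc n) then show ?case using assms by (auto simp: poly_power power_0_left)
qed

lemma orbit: assumes "d \<ge> 1"
  shows "(fdc d c ^^ n) (Fin 0) = proj (poly (fst (XY d n)) c, poly (snd (XY d n)) c)"
proof (induction n)
  case 0 then show ?case by (simp add: proj_def)
next
  case (Suc n)
  show ?case using proj_step[OF XY_nz[OF assms, of n c] assms, where c=c] Suc
    by (simp add: poly_power)
qed

lemma XY_deg: assumes "d \<ge> 1"
  shows "fst (XY d (Suc n)) \<noteq> 0 \<and> d * degree (fst (XY d n)) \<le> degree (fst (XY d (Suc n)))"
proof (induction n)
  case 0 then show ?case using assms by (simp add: power_0_left)
next
  case (Suc n)
  let ?A = "fst (XY d n)" and ?B = "fst (XY d (Suc n))"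
  have e: "fst (XY d (Suc (Suc n))) = ?A ^ (d*d) + [:0,1:] * ?B ^ d"
    by (simp add: power_mult)
  have dB: "degree ([:0,1:] * ?B ^ d) = 1 + d * degree ?B"
    using Suc by (simp add: degree_mult_eq degree_power_eq)
  have "degree (?A ^ (d*d)) \<le> d * d * degree ?A"
    using degree_power_le[of ?A "d*d"] by (simp add: mult.commute)
  also have "\<dots> \<le> d * degree ?B" using Suc by simp
  finally have lt: "degree (?A ^ (d*d)) < degree ([:0,1:] * ?B ^ d)" using dB by simp
  have DD: "degree (fst (XY d (Suc (Suc n)))) = 1 + d * degree ?B"
    using e degree_add_eq_right[OF lt] dB by simp
  then have "fst (XY d (Suc (Suc n))) \<noteq> 0" by (metis add_is_0 one_neq_zero degree_0)
  then show ?case using DD by simp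
qed

lemma XY_pos: assumes "d \<ge> 1" shows "degree (fst (XY d (Suc (Suc n)))) \<ge> 1"
proof -
  let ?A = "fst (XY d n)" and ?B = "fst (XY d (Suc n))"
  have e: "fst (XY d (Suc (Suc n))) = ?A ^ (d*d) + [:0,1:] * ?B ^ d"
    by (simp add: power_mult)
  have dB: "degree ([:0,1:] * ?B ^ d) = 1 + d * degree ?B"
    using XY_deg[OF assms, of n] by (simp add: degree_mult_eq degree_power_eq)
  have "degree (?A ^ (d*d)) \<le> d * d * degree ?A"
    using degree_power_le[of ?A "d*d"] by (simp add: mult.commute)
  also have "\<dots> \<le> d * degree ?B" using XY_deg[OF assms, of n] by simp
  finally have lt: "degree (?A ^ (d*d)) < degree ([:0,1:] * ?B ^ d)" using dB by simp
  show ?thesis using e degree_add_eq_right[OF lt] dB by simp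
qed

lemma funpow_period:
  assumes "(f ^^ j) x = x" shows "(f ^^ (k * j)) x = x"
proof (induction k)
  case 0 then show ?case by simp
next
  case (Suc k)
  have "(f ^^ (Suc k * j)) x = (f ^^ j) ((f ^^ (k*j)) x)"
    by (simp add: funpow_add add.commute)
  then show ?case using Suc assms by simp
qed

lemma prime_period:
  assumes "prime (p::nat)" "(f ^^ p) x = x" "f x \<noteq> x"
  shows "exact_period f x p"
  unfolding exact_period_def
proof (intro conjI allI impI)
  show "(f ^^ p) x = x" by fact
  fix j assume j: "0 < j \<and> j < p"
  show "(f ^^ j) x \<noteq> x"
  proof
    assume h: "(f ^^ j) x = x"
    have "\<not> p dvd j" using j by (auto dest: dvd_imp_le)
    then have "coprime p j" using assms(1) by (simp add: prime_imp_coprime)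
    then have g: "gcd j p = 1" by (simp add: coprime_iff_gcd_eq_1 gcd.commute)
    obtain a b where ab: "j * a = p * b + 1" using bezout_nat[of j p] j g by auto
    have "(f ^^ (a * j)) x = x" by (rule funpow_period[OF h])
    moreover have "(f ^^ (a * j)) x = f ((f ^^ (b * p)) x)"
      using ab by (simp add: mult.commute)
    moreover have "(f ^^ (b * p)) x = x" by (rule funpow_period[OF assms(2)])
    ultimately show False using assms(3) by simp
  qed
qed

lemma noncrit:
  assumes "z \<noteq> 0" "d \<ge> 1"
  shows "\<not> critical_point (fdc d c) (Fin z)"
proof -
  define g where "g = (\<lambda>w. chart (fdc d c (Fin z)) (fdc d c (chart_inv (Fin z) w)))"
  define h where "h = (\<lambda>w::complex. inverse ((w + z)^d) - inverse (z^d))"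
  have hd: "(h has_field_derivative (- (of_nat d * z^(d-1)) / (z^d)^2)) (at 0)"
    unfolding h_def using assms
    by (auto intro!: derivative_eq_intros simp: power2_eq_square field_simps)
  have "(g has_field_derivative (- (of_nat d * z^(d-1)) / (z^d)^2)) (at 0)"
  proof (rule has_field_derivative_transform_within_open[OF hd, of "ball 0 (norm z)"])
    fix w :: complex assume "w \<in> ball 0 (norm z)"
    then have "w + z \<noteq> 0" using assms
      by (metis add.commute add_eq_0_iff dist_0_norm mem_ball norm_minus_cancel order_less_irrefl)
    then show "h w = g w" using assms by (simp add: g_def h_def)
  qed (use assms in auto)
  then have "deriv g 0 = (- (of_nat d * z^(d-1)) / (z^d)^2)" by (rule DERIV_imp_deriv)
  moreover have "(- (of_nat d * z^(d-1)) / (z^d)^2) \<noteq> 0" using assms by simp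
  ultimately show ?thesis using assms by (simp add: critical_point_def g_def)
qed

theorem mainTheorem13:
  fixes d p :: nat
  assumes "d \<ge> 2" and "prime p"
  shows "\<exists>c::complex. \<forall>P. critical_point (fdc d c) P \<longrightarrow> exact_period (fdc d c) P p"
proof -
  have d1: "d \<ge> 1" using assms by simp
  have "p \<ge> 2" using assms(2) prime_ge_2_nat by blast
  then obtain n where pn: "p = Suc (Suc n)" by (metis add_2_eq_Suc le_Suc_ex)
  have "\<not> constant (poly (fst (XY d p)))"
    using XY_pos[OF d1, of n] pn by (simp add: constant_degree)
  then obtain c where c: "poly (fst (XY d p)) c = 0"
    using fundamental_theorem_of_algebra by blast
  let ?f = "fdc d c"
  have "(?f ^^ p) (Fin 0) = Fin 0"
    using orbit[OF d1, where c=c and n=p] c XY_nz[OF d1, of p c] by (simp add: proj_def)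
  then have P0: "exact_period ?f (Fin 0) p"
    by (intro prime_period assms) auto
  have "(?f ^^ p) Infty = Infty"
  proof -
    have "(?f ^^ p) (?f (Fin 0)) = ?f ((?f ^^ p) (Fin 0))"
      by (metis comp_apply funpow_swap1)
    then show ?thesis using \<open>(?f ^^ p) (Fin 0) = Fin 0\<close> by simp
  qed
  then have PI: "exact_period ?f Infty p"
    by (intro prime_period assms) auto
  show ?thesis
  proof (intro exI allI impI)
    fix P assume "critical_point ?f P"
    then show "exact_period ?f P p"
      using P0 PI noncrit[OF _ d1, of _ c]
      by (cases P) (auto, metis)
  qed
qed

end
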